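(* Suppose Assumptions 1–4 hold and the scale function is $s(t)=t$ (on $(0,\infty)$) or $s(t)=\exp(t)$ (on $\mathbb{R}$). Let $\theta^*=(\beta^*,\gamma^* )$ be the unique minimizer of $Q$ over $\Theta$. Then $$E\Big[\frac{1}{s(X'\gamma^* )}(Y-X'\beta^* )^2\Big]\le E\big[(Y-X'\beta_{LS})^2\big]^{1/2},$$ with equality if and only if $\theta^*=\theta_{LS}$.
   Context: Let $Y$ be a scalar random variable and $X$ a random $k\times1$ vector whose first component equals $1$; let $\mathcal{X}$ denote the support of $X$. Write $\mu(X)=E[Y\mid X]$ and $\sigma(X)^2=E[(Y-\mu(X))^2\mid X]$. Let $s$ be a positive scale function, write $s_j(t)=\partial^j s(t)/\partial t^j$ for $j=1,2,3$, and set $\Theta_\gamma=\{\gamma\in\mathbb{R}^k:\Pr[s(X'\gamma)>0]=1\}$ and $\Theta=\mathbb{R}^k\times\Theta_\gamma$. For $\theta=(\beta,\gamma)\in\Theta$ put $e(Y,X,\theta)=(Y-X'\beta)/s(X'\gamma)$ and $Q(\theta)=E\big[\tfrac12\{e(Y,X,\theta)^2+1\}s(X'\gamma)\big]$. OLS solution: let $\Theta_{\gamma,LS}=\{\gamma\in\mathbb{R}:s(\gamma)>0\}$ and $(\beta_{LS},\gamma_{LS})=\arg\min_{(\beta,\gamma)\in\mathbb{R}^k\times\Theta_{\gamma,LS}}E\big[\tfrac12\{((Y-X'\beta)/s(\gamma))^2+1\}s(\gamma)\big]$; set $\theta_{LS}=(\beta_{LS},(\gamma_{LS},0_{k-1}))\in\Theta$.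 Assumption 1: for $a=0$ or $a=-\infty$, $s:(a,\infty)\to(0,\infty)$ is three times differentiable, strictly increasing and convex, with $\lim_{t\to a}s(t)=0$ and $\lim_{t\to\infty}s(t)=\infty$. Assumption 2: $x\mapsto\sigma(x)^2$ is bounded away from $0$ uniformly on $\mathcal{X}$. Assumption 3: (i) $E[Y^4]<\infty$ and $E\|X\|^4<\infty$; (ii) for all $\gamma\in\Theta_\gamma$, $E[\|X\|^4s_2(X'\gamma)^2]<\infty$, $E[\|X\|^6s_3(X'\gamma)^2]<\infty$ and $E[\|X\|^6s_1(X'\gamma)^2s_2(X'\gamma)^2]<\infty$. Assumption 4: for all $\gamma\in\Theta_\gamma$, $E[XX'/s(X'\gamma)]$ is nonsingular. *)

theory Defs
  imports "HOL-Probability.Probability"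
begin

definition sigmaX :: "'a measure \<Rightarrow> ('a \<Rightarrow> real^'k) \<Rightarrow> 'a measure" where
  "sigmaX M X = vimage_algebra (space M) X borel"

definition cond_mean :: "'a measure \<Rightarrow> ('a \<Rightarrow> real^'k) \<Rightarrow> ('a \<Rightarrow> real) \<Rightarrow> 'a \<Rightarrow> real" where
  "cond_mean M X Y = real_cond_exp M (sigmaX M X) Y"

definition cond_var :: "'a measure \<Rightarrow> ('a \<Rightarrow> real^'k) \<Rightarrow> ('a \<Rightarrow> real) \<Rightarrow> 'a \<Rightarrow> real" where
  "cond_var M X Y = real_cond_exp M (sigmaX M X) (\<lambda>\<omega>. (Y \<omega> - cond_mean M X Y \<omega>)\<^sup>2)"

definition Theta_g :: "'a measure \<Rightarrow> ('a \<Rightarrow> real^'k) \<Rightarrow> (real \<Rightarrow> real) \<Rightarrow> (real^'k) set" where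
  "Theta_g M X s = {\<gamma>. AE \<omega> in M. s (X \<omega> \<bullet> \<gamma>) > 0}"

definition Qobj :: "'a measure \<Rightarrow> ('a \<Rightarrow> real) \<Rightarrow> ('a \<Rightarrow> real^'k) \<Rightarrow> (real \<Rightarrow> real)
    \<Rightarrow> real^'k \<Rightarrow> real^'k \<Rightarrow> ennreal" where
  "Qobj M Y X s \<beta> \<gamma> =
     (\<integral>\<^sup>+ \<omega>. ennreal ((((Y \<omega> - X \<omega> \<bullet> \<beta>) / s (X \<omega> \<bullet> \<gamma>))\<^sup>2 + 1) * s (X \<omega> \<bullet> \<gamma>) / 2) \<partial>M)"

definition QLS :: "'a measure \<Rightarrow> ('a \<Rightarrow> real) \<Rightarrow> ('a \<Rightarrow> real^'k) \<Rightarrow> (real \<Rightarrow> real)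
    \<Rightarrow> real^'k \<Rightarrow> real \<Rightarrow> ennreal" where
  "QLS M Y X s \<beta> g =
     (\<integral>\<^sup>+ \<omega>. ennreal ((((Y \<omega> - X \<omega> \<bullet> \<beta>) / s g)\<^sup>2 + 1) * s g / 2) \<partial>M)"

end

theory Submission
  imports Defs
begin
lemma real_key:
  fixes a b :: real assumes "0 \<le> a" "0 \<le> b" and H: "\<And>k. k > 0 \<Longrightarrow> a + b \<le> a / k + k * b"
  shows "a = b"
proof (cases "b = 0")
  case True
  have "a + b \<le> a/2 + 2*b" using H[of 2] by simp
  then show ?thesis using True assms by simp
next
  case False
  then have bp: "b > 0" using assms by simp
  define k where "k = (a+b)/(2*b)"
  have kp: "k > 0" using bp assms unfolding k_def by (simp add: divide_pos_pos)
  have h: "a + b \<le> a / k + k * b" using H kp by simp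
  have apb: "a + b > 0" using bp assms by simp
  have "a / k = 2*a*b/(a+b)" unfolding k_def using bp apb by (simp add: field_simps)
  moreover have "k * b = (a+b)/2" unfolding k_def using bp by (simp add: field_simps)
  ultimately have "a + b \<le> 2*a*b/(a+b) + (a+b)/2" using h by linarith
  then have "(a+b)*(a+b) \<le> 4*a*b" using apb by (simp add: field_simps)
  then have "(a-b)^2 \<le> 0" by (simp add: power2_eq_square algebra_simps)
  then show ?thesis by simp
qed

lemma amgm:
  fixes L t :: real assumes "0 \<le> L" "t > 0"
  shows "sqrt L \<le> L/(2*t) + t/2"
proof -
  have "0 \<le> (sqrt L - t)^2" by simp
  then have "0 \<le> L - 2*t * sqrt L + t*t" using assms by (simp add: power2_eq_square algebra_simps)
  then show ?thesis using assms by (simp add: field_simps)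
qed

lemma inner_delta: "(x::real^'k) \<bullet> (\<chi> i. if i = i0 then c else 0) = x$i0 * c"
  by (simp add: inner_vec_def if_distrib cong: if_cong)

lemma ennreal_ex: "(A::ennreal) \<noteq> \<infinity> \<Longrightarrow> \<exists>a\<ge>0. A = ennreal a"
  by (cases A) auto

lemma meas_facts:
  fixes M :: "'a measure" and X :: "'a \<Rightarrow> real^'k"
  assumes Ym: "Y \<in> borel_measurable M" and Xm: "X \<in> borel_measurable M"
    and sm: "s \<in> borel_measurable borel"
  shows "(\<lambda>\<omega>. ennreal ((Y \<omega> - X \<omega> \<bullet> \<beta>)\<^sup>2 / s (X \<omega> \<bullet> \<gamma>))) \<in> borel_measurable M"
    "(\<lambda>\<omega>. ennreal (s (X \<omega> \<bullet> \<gamma>))) \<in> borel_measurable M"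
proof -
  have iX: "(\<lambda>\<omega>. X \<omega> \<bullet> \<gamma>) \<in> borel_measurable M" by (intro borel_measurable_inner Xm borel_measurable_const)
  have sXm: "(\<lambda>\<omega>. s (X \<omega> \<bullet> \<gamma>)) \<in> borel_measurable M" by (rule measurable_compose[OF iX sm])
  have iXb: "(\<lambda>\<omega>. X \<omega> \<bullet> \<beta>) \<in> borel_measurable M" by (intro borel_measurable_inner Xm borel_measurable_const)
  have fD: "(\<lambda>\<omega>. (Y \<omega> - X \<omega> \<bullet> \<beta>)\<^sup>2) \<in> borel_measurable M"
    by (intro borel_measurable_power borel_measurable_diff Ym iXb)
  have fq: "(\<lambda>\<omega>. (Y \<omega> - X \<omega> \<bullet> \<beta>)\<^sup>2 / s (X \<omega> \<bullet> \<gamma>)) \<in> borel_measurable M"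
    by (rule borel_measurable_divide[OF fD sXm])
  show "(\<lambda>\<omega>. ennreal ((Y \<omega> - X \<omega> \<bullet> \<beta>)\<^sup>2 / s (X \<omega> \<bullet> \<gamma>))) \<in> borel_measurable M"
    by (rule measurable_compose[OF fq measurable_ennreal])
  show "(\<lambda>\<omega>. ennreal (s (X \<omega> \<bullet> \<gamma>))) \<in> borel_measurable M"
    by (rule measurable_compose[OF sXm measurable_ennreal])
qed

lemma Qsplit:
  fixes M :: "'a measure" and X :: "'a \<Rightarrow> real^'k"
  assumes Ym: "Y \<in> borel_measurable M" and Xm: "X \<in> borel_measurable M"
    and sm: "s \<in> borel_measurable borel" and g: "\<gamma> \<in> Theta_g M X s"
  shows "Qobj M Y X s \<beta> \<gamma> = ((\<integral>\<^sup>+\<omega>. ennreal ((Y \<omega> - X \<omega> \<bullet> \<beta>)\<^sup>2 / s (X \<omega> \<bullet> \<gamma>)) \<partial>M)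
      + (\<integral>\<^sup>+\<omega>. ennreal (s (X \<omega> \<bullet> \<gamma>)) \<partial>M)) * ennreal (1/2)"
proof -
  note mf = meas_facts[OF Ym Xm sm]
  have AE: "AE \<omega> in M. s (X \<omega> \<bullet> \<gamma>) > 0" using g unfolding Theta_g_def by simp
  have "Qobj M Y X s \<beta> \<gamma> = (\<integral>\<^sup>+\<omega>. (ennreal ((Y \<omega> - X \<omega> \<bullet> \<beta>)\<^sup>2 / s (X \<omega> \<bullet> \<gamma>))
        + ennreal (s (X \<omega> \<bullet> \<gamma>))) * ennreal (1/2) \<partial>M)"
    unfolding Qobj_def
  proof (rule nn_integral_cong_AE)
    show "AE \<omega> in M. ennreal ((((Y \<omega> - X \<omega> \<bullet> \<beta>) / s (X \<omega> \<bullet> \<gamma>))\<^sup>2 + 1) * s (X \<omega> \<bullet> \<gamma>) / 2) =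
      (ennreal ((Y \<omega> - X \<omega> \<bullet> \<beta>)\<^sup>2 / s (X \<omega> \<bullet> \<gamma>)) + ennreal (s (X \<omega> \<bullet> \<gamma>))) * ennreal (1/2)"
      using AE
    proof eventually_elim
      case (elim \<omega>)
      define t where "t = s (X \<omega> \<bullet> \<gamma>)"
      define e where "e = Y \<omega> - X \<omega> \<bullet> \<beta>"
      have t: "t > 0" using elim t_def by simp
      have eq: "((e / t)\<^sup>2 + 1) * t / 2 = (e\<^sup>2 / t + t) * (1/2)"
        using t by (simp add: field_simps power2_eq_square)
      have m1: "ennreal ((e\<^sup>2 / t + t) * (1/2)) = ennreal (e\<^sup>2 / t + t) * ennreal (1/2)"
        by (rule ennreal_mult) (use t in auto)
      have m2: "ennreal (e\<^sup>2 / t + t) = ennreal (e\<^sup>2 / t) + ennreal t"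
        by (rule ennreal_plus) (use t in auto)
      have "ennreal (((e / t)\<^sup>2 + 1) * t / 2) = (ennreal (e\<^sup>2 / t) + ennreal t) * ennreal (1/2)"
        by (simp only: eq m1 m2)
      then show ?case unfolding t_def e_def .
    qed
  qed
  also have "\<dots> = (\<integral>\<^sup>+\<omega>. ennreal ((Y \<omega> - X \<omega> \<bullet> \<beta>)\<^sup>2 / s (X \<omega> \<bullet> \<gamma>)) + ennreal (s (X \<omega> \<bullet> \<gamma>)) \<partial>M) * ennreal (1/2)"
    by (rule nn_integral_multc) (rule borel_measurable_add[OF mf])
  also have "\<dots> = ((\<integral>\<^sup>+\<omega>. ennreal ((Y \<omega> - X \<omega> \<bullet> \<beta>)\<^sup>2 / s (X \<omega> \<bullet> \<gamma>)) \<partial>M)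
      + (\<integral>\<^sup>+\<omega>. ennreal (s (X \<omega> \<bullet> \<gamma>)) \<partial>M)) * ennreal (1/2)"
    by (subst nn_integral_add[OF mf]) (rule refl)
  finally show ?thesis .
qed

lemma scale_lemma:
  fixes M :: "'a measure" and X :: "'a \<Rightarrow> real^'k"
  assumes Ym: "Y \<in> borel_measurable M" and Xm: "X \<in> borel_measurable M"
    and sm: "s \<in> borel_measurable borel" and g: "\<gamma> \<in> Theta_g M X s" and k: "k > 0"
    and sc: "\<And>\<omega>. \<omega> \<in> space M \<Longrightarrow> s (X \<omega> \<bullet> \<gamma>') = k * s (X \<omega> \<bullet> \<gamma>)"
  shows "\<gamma>' \<in> Theta_g M X s"
    "(\<integral>\<^sup>+\<omega>. ennreal ((Y \<omega> - X \<omega> \<bullet> \<beta>)\<^sup>2 / s (X \<omega> \<bullet> \<gamma>')) \<partial>M)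
      = ennreal (1/k) * (\<integral>\<^sup>+\<omega>. ennreal ((Y \<omega> - X \<omega> \<bullet> \<beta>)\<^sup>2 / s (X \<omega> \<bullet> \<gamma>)) \<partial>M)"
    "(\<integral>\<^sup>+\<omega>. ennreal (s (X \<omega> \<bullet> \<gamma>')) \<partial>M) = ennreal k * (\<integral>\<^sup>+\<omega>. ennreal (s (X \<omega> \<bullet> \<gamma>)) \<partial>M)"
proof -
  note mf = meas_facts[OF Ym Xm sm]
  have AE: "AE \<omega> in M. s (X \<omega> \<bullet> \<gamma>) > 0" using g unfolding Theta_g_def by simp
  have "AE \<omega> in M. s (X \<omega> \<bullet> \<gamma>') > 0"
    using AE by (rule AE_mp) (auto intro!: AE_I2 simp: sc k)
  then show "\<gamma>' \<in> Theta_g M X s" unfolding Theta_g_def by simp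
  have "(\<integral>\<^sup>+\<omega>. ennreal ((Y \<omega> - X \<omega> \<bullet> \<beta>)\<^sup>2 / s (X \<omega> \<bullet> \<gamma>')) \<partial>M)
     = (\<integral>\<^sup>+\<omega>. ennreal (1/k) * ennreal ((Y \<omega> - X \<omega> \<bullet> \<beta>)\<^sup>2 / s (X \<omega> \<bullet> \<gamma>)) \<partial>M)"
  proof (rule nn_integral_cong)
    fix x assume x: "x \<in> space M"
    have e: "(Y x - X x \<bullet> \<beta>)\<^sup>2 / s (X x \<bullet> \<gamma>') = (1/k) * ((Y x - X x \<bullet> \<beta>)\<^sup>2 / s (X x \<bullet> \<gamma>))"
      using sc[OF x] by simp
    show "ennreal ((Y x - X x \<bullet> \<beta>)\<^sup>2 / s (X x \<bullet> \<gamma>')) = ennreal (1/k) * ennreal ((Y x - X x \<bullet> \<beta>)\<^sup>2 / s (X x \<bullet> \<gamma>))"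
      unfolding e by (rule ennreal_mult') (use k in simp)
  qed
  also have "\<dots> = ennreal (1/k) * (\<integral>\<^sup>+\<omega>. ennreal ((Y \<omega> - X \<omega> \<bullet> \<beta>)\<^sup>2 / s (X \<omega> \<bullet> \<gamma>)) \<partial>M)"
    by (rule nn_integral_cmult[OF mf(1)])
  finally show "(\<integral>\<^sup>+\<omega>. ennreal ((Y \<omega> - X \<omega> \<bullet> \<beta>)\<^sup>2 / s (X \<omega> \<bullet> \<gamma>')) \<partial>M)
      = ennreal (1/k) * (\<integral>\<^sup>+\<omega>. ennreal ((Y \<omega> - X \<omega> \<bullet> \<beta>)\<^sup>2 / s (X \<omega> \<bullet> \<gamma>)) \<partial>M)" .
  have "(\<integral>\<^sup>+\<omega>. ennreal (s (X \<omega> \<bullet> \<gamma>')) \<partial>M) = (\<integral>\<^sup>+\<omega>. ennreal k * ennreal (s (X \<omega> \<bullet> \<gamma>)) \<partial>M)"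
  proof (rule nn_integral_cong)
    fix x assume x: "x \<in> space M"
    show "ennreal (s (X x \<bullet> \<gamma>')) = ennreal k * ennreal (s (X x \<bullet> \<gamma>))"
      unfolding sc[OF x] by (rule ennreal_mult') (use k in simp)
  qed
  also have "\<dots> = ennreal k * (\<integral>\<^sup>+\<omega>. ennreal (s (X \<omega> \<bullet> \<gamma>)) \<partial>M)"
    by (rule nn_integral_cmult[OF mf(2)])
  finally show "(\<integral>\<^sup>+\<omega>. ennreal (s (X \<omega> \<bullet> \<gamma>')) \<partial>M) = ennreal k * (\<integral>\<^sup>+\<omega>. ennreal (s (X \<omega> \<bullet> \<gamma>)) \<partial>M)" .
qed

lemma QLS_val:
  fixes M :: "'a measure" and X :: "'a \<Rightarrow> real^'k"
  assumes P: "prob_space M" and I: "integrable M (\<lambda>\<omega>. (Y \<omega> - X \<omega> \<bullet> \<beta>)\<^sup>2)" and t: "s g > 0"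
  shows "QLS M Y X s \<beta> g = ennreal ((\<integral>\<omega>. (Y \<omega> - X \<omega> \<bullet> \<beta>)\<^sup>2 \<partial>M) / (2 * s g) + s g / 2)"
proof -
  interpret prob_space M by (rule P)
  have "QLS M Y X s \<beta> g = (\<integral>\<^sup>+\<omega>. ennreal ((Y \<omega> - X \<omega> \<bullet> \<beta>)\<^sup>2 / (2 * s g) + s g / 2) \<partial>M)"
    unfolding QLS_def
  proof (rule nn_integral_cong)
    fix x
    have "(((Y x - X x \<bullet> \<beta>) / s g)\<^sup>2 + 1) * s g / 2 = (Y x - X x \<bullet> \<beta>)\<^sup>2 / (2 * s g) + s g / 2"
      using t by (simp add: field_simps power2_eq_square)
    then show "ennreal ((((Y x - X x \<bullet> \<beta>) / s g)\<^sup>2 + 1) * s g / 2) = ennreal ((Y x - X x \<bullet> \<beta>)\<^sup>2 / (2 * s g) + s g / 2)"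
      by (simp only:)
  qed
  also have "\<dots> = ennreal (\<integral>\<omega>. (Y \<omega> - X \<omega> \<bullet> \<beta>)\<^sup>2 / (2 * s g) + s g / 2 \<partial>M)"
    by (rule nn_integral_eq_integral) (use I t in auto)
  also have "(\<integral>\<omega>. (Y \<omega> - X \<omega> \<bullet> \<beta>)\<^sup>2 / (2 * s g) + s g / 2 \<partial>M)
      = (\<integral>\<omega>. (Y \<omega> - X \<omega> \<bullet> \<beta>)\<^sup>2 \<partial>M) / (2 * s g) + s g / 2"
    using I by (simp add: prob_space)
  finally show ?thesis .
qed

lemma integrable_D:
  fixes M :: "'a measure" and X :: "'a \<Rightarrow> real^'k"
  assumes P: "prob_space M" and Ym: "Y \<in> borel_measurable M" and Xm: "X \<in> borel_measurable M"
    and I1: "integrable M (\<lambda>\<omega>. (Y \<omega>) ^ 4)" and I2: "integrable M (\<lambda>\<omega>. (norm (X \<omega>)) ^ 4)"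
  shows "integrable M (\<lambda>\<omega>. (Y \<omega> - X \<omega> \<bullet> \<beta>)\<^sup>2)"
proof -
  interpret prob_space M by (rule P)
  have bI: "integrable M (\<lambda>\<omega>. 2 * (1 + (Y \<omega>) ^ 4) + 2 * (norm \<beta>)\<^sup>2 * (1 + (norm (X \<omega>)) ^ 4))"
    using I1 I2 by auto
  show ?thesis
  proof (rule Bochner_Integration.integrable_bound[OF bI])
    show "(\<lambda>\<omega>. (Y \<omega> - X \<omega> \<bullet> \<beta>)\<^sup>2) \<in> borel_measurable M" using Ym Xm by measurable
    show "AE \<omega> in M. norm ((Y \<omega> - X \<omega> \<bullet> \<beta>)\<^sup>2) \<le> norm (2 * (1 + (Y \<omega>) ^ 4) + 2 * (norm \<beta>)\<^sup>2 * (1 + (norm (X \<omega>)) ^ 4))"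
    proof (rule AE_I2)
      fix \<omega>
      define y where "y = Y \<omega>"
      define z where "z = X \<omega> \<bullet> \<beta>"
      define n where "n = norm (X \<omega>)"
      have cs: "z\<^sup>2 \<le> n\<^sup>2 * (norm \<beta>)\<^sup>2"
      proof -
        have "\<bar>z\<bar> \<le> n * norm \<beta>" unfolding z_def n_def by (rule Cauchy_Schwarz_ineq2)
        then have "\<bar>z\<bar>\<^sup>2 \<le> (n * norm \<beta>)\<^sup>2" by (rule power_mono) simp
        then show ?thesis by (simp add: power_mult_distrib)
      qed
      have n2: "n\<^sup>2 \<le> 1 + n ^ 4"
      proof -
        have "0 \<le> (n\<^sup>2 - 1)\<^sup>2" by simp
        then have "2 * n\<^sup>2 \<le> 1 + n ^ 4" by (simp add: power2_eq_square algebra_simps power4_eq_xxxx)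
        moreover have "0 \<le> n\<^sup>2" by simp
        ultimately show ?thesis by linarith
      qed
      have y2: "y\<^sup>2 \<le> 1 + y ^ 4"
      proof -
        have "0 \<le> (y\<^sup>2 - 1)\<^sup>2" by simp
        then have "2 * y\<^sup>2 \<le> 1 + y ^ 4" by (simp add: power2_eq_square algebra_simps power4_eq_xxxx)
        moreover have "0 \<le> y\<^sup>2" by simp
        ultimately show ?thesis by linarith
      qed
      have "(y - z)\<^sup>2 \<le> 2 * y\<^sup>2 + 2 * z\<^sup>2"
      proof -
        have "0 \<le> (y + z)\<^sup>2" by simp
        then show ?thesis by (simp add: power2_eq_square algebra_simps)
      qed
      also have "\<dots> \<le> 2 * (1 + y ^ 4) + 2 * (norm \<beta>)\<^sup>2 * (1 + n ^ 4)"
      proof -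
        have "n\<^sup>2 * (norm \<beta>)\<^sup>2 \<le> (1 + n ^ 4) * (norm \<beta>)\<^sup>2"
          by (rule mult_right_mono[OF n2]) simp
        then show ?thesis using cs y2 by (simp add: algebra_simps)
      qed
      finally have "(y - z)\<^sup>2 \<le> 2 * (1 + y ^ 4) + 2 * (norm \<beta>)\<^sup>2 * (1 + n ^ 4)" .
      moreover have "0 \<le> 2 * (1 + y ^ 4) + 2 * (norm \<beta>)\<^sup>2 * (1 + n ^ 4)" by simp
      ultimately show "norm ((Y \<omega> - X \<omega> \<bullet> \<beta>)\<^sup>2) \<le> norm (2 * (1 + (Y \<omega>) ^ 4) + 2 * (norm \<beta>)\<^sup>2 * (1 + (norm (X \<omega>)) ^ 4))"
        unfolding y_def z_def n_def by simp
    qed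
  qed
qed
theorem corollary1:
  fixes M :: "'a measure" and Y :: "'a \<Rightarrow> real" and X :: "'a \<Rightarrow> real^'k"
    and i0 :: 'k and s :: "real \<Rightarrow> real"
    and \<beta>s \<gamma>s \<beta>LS :: "real^'k" and \<gamma>LS :: real
  assumes P: "prob_space M"
    and Ymeas: "Y \<in> borel_measurable M" and Xmeas: "X \<in> borel_measurable M"
    and first_one: "\<And>\<omega>. \<omega> \<in> space M \<Longrightarrow> X \<omega> $ i0 = 1"
    and scale: "s = (\<lambda>t. t) \<or> s = exp"
    and A2: "\<exists>c>0. AE \<omega> in M. c \<le> cond_var M X Y \<omega>"
    and A3i: "integrable M (\<lambda>\<omega>. (Y \<omega>) ^ 4)" "integrable M (\<lambda>\<omega>. (norm (X \<omega>)) ^ 4)"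
    and A3ii: "\<And>\<gamma>. \<gamma> \<in> Theta_g M X s \<Longrightarrow>
         integrable M (\<lambda>\<omega>. norm (X \<omega>) ^ 4 * ((deriv ^^ 2) s (X \<omega> \<bullet> \<gamma>))\<^sup>2) \<and>
         integrable M (\<lambda>\<omega>. norm (X \<omega>) ^ 6 * ((deriv ^^ 3) s (X \<omega> \<bullet> \<gamma>))\<^sup>2) \<and>
         integrable M (\<lambda>\<omega>. norm (X \<omega>) ^ 6 * (deriv s (X \<omega> \<bullet> \<gamma>))\<^sup>2
                                           * ((deriv ^^ 2) s (X \<omega> \<bullet> \<gamma>))\<^sup>2)"
    and A4: "\<And>\<gamma>. \<gamma> \<in> Theta_g M X s \<Longrightarrow>
         (\<forall>i j. integrable M (\<lambda>\<omega>. X \<omega> $ i * X \<omega> $ j / s (X \<omega> \<bullet> \<gamma>))) \<and>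
         invertible (\<chi> i j. \<integral>\<omega>. X \<omega> $ i * X \<omega> $ j / s (X \<omega> \<bullet> \<gamma>) \<partial>M)"
    and star_in: "\<gamma>s \<in> Theta_g M X s"
    and star_unique_min: "\<And>\<beta> \<gamma>. \<gamma> \<in> Theta_g M X s \<Longrightarrow> (\<beta>, \<gamma>) \<noteq> (\<beta>s, \<gamma>s) \<Longrightarrow>
         Qobj M Y X s \<beta>s \<gamma>s < Qobj M Y X s \<beta> \<gamma>"
    and LS_in: "s \<gamma>LS > 0"
    and LS_min: "\<And>\<beta> g. s g > 0 \<Longrightarrow> QLS M Y X s \<beta>LS \<gamma>LS \<le> QLS M Y X s \<beta> g"
  shows "(\<integral>\<^sup>+ \<omega>. ennreal ((Y \<omega> - X \<omega> \<bullet> \<beta>s)\<^sup>2 / s (X \<omega> \<bullet> \<gamma>s)) \<partial>M)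
           \<le> ennreal (sqrt (\<integral>\<omega>. (Y \<omega> - X \<omega> \<bullet> \<beta>LS)\<^sup>2 \<partial>M))
       \<and> ((\<integral>\<^sup>+ \<omega>. ennreal ((Y \<omega> - X \<omega> \<bullet> \<beta>s)\<^sup>2 / s (X \<omega> \<bullet> \<gamma>s)) \<partial>M)
             = ennreal (sqrt (\<integral>\<omega>. (Y \<omega> - X \<omega> \<bullet> \<beta>LS)\<^sup>2 \<partial>M))
          \<longleftrightarrow> (\<beta>s = \<beta>LS \<and> \<gamma>s = (\<chi> i. if i = i0 then \<gamma>LS else 0)))"
proof -
  interpret prob_space M by (rule P)
  have sm: "s \<in> borel_measurable borel"
  proof (cases "s = (\<lambda>t. t)")
    case True then show ?thesis by (simp add: borel_measurable_continuous_onI continuous_on_id)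
  next
    case False then have "s = exp" using scale by simp
    then show ?thesis by (simp add: borel_measurable_continuous_onI continuous_on_exp continuous_on_id)
  qed
  have surj: "\<exists>g. s g = u" if "u > 0" for u
  proof (cases "s = (\<lambda>t. t)")
    case True then show ?thesis by auto
  next
    case False then have "s = exp" using scale by simp
    then show ?thesis using that by (intro exI[of _ "ln u"]) simp
  qed
  have scl: "\<exists>\<gamma>'. \<forall>\<omega>\<in>space M. s (X \<omega> \<bullet> \<gamma>') = k * s (X \<omega> \<bullet> \<gamma>s)" if "k > 0" for k
  proof (cases "s = (\<lambda>t. t)")
    case True then show ?thesis by (intro exI[of _ "k *\<^sub>R \<gamma>s"]) simp
  next
    case False then have e: "s = exp" using scale by simp
    show ?thesis
    proof (intro exI[of _ "\<gamma>s + (\<chi> i. if i = i0 then ln k else 0)"] ballI)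
      fix \<omega> assume w: "\<omega> \<in> space M"
      have "X \<omega> \<bullet> (\<gamma>s + (\<chi> i. if i = i0 then ln k else 0)) = X \<omega> \<bullet> \<gamma>s + ln k"
        by (simp add: inner_add_right inner_delta first_one[OF w])
      then show "s (X \<omega> \<bullet> (\<gamma>s + (\<chi> i. if i = i0 then ln k else 0))) = k * s (X \<omega> \<bullet> \<gamma>s)"
        using that by (simp add: e exp_add)
    qed
  qed
  define \<gamma>v where "\<gamma>v = (\<chi> i. if i = i0 then \<gamma>LS else 0)"
  have XLS: "X \<omega> \<bullet> \<gamma>v = \<gamma>LS" if "\<omega> \<in> space M" for \<omega>
    unfolding \<gamma>v_def by (simp add: inner_delta first_one[OF that])
  have LSv_in: "\<gamma>v \<in> Theta_g M X s"
    unfolding Theta_g_def by (auto intro!: AE_I2 simp: XLS LS_in)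
  have QLS_eq: "Qobj M Y X s \<beta>LS \<gamma>v = QLS M Y X s \<beta>LS \<gamma>LS"
    unfolding Qobj_def QLS_def by (rule nn_integral_cong) (simp add: XLS)
  define L where "L = (\<integral>\<omega>. (Y \<omega> - X \<omega> \<bullet> \<beta>LS)\<^sup>2 \<partial>M)"
  have IL: "integrable M (\<lambda>\<omega>. (Y \<omega> - X \<omega> \<bullet> \<beta>LS)\<^sup>2)"
    by (rule integrable_D[OF P Ymeas Xmeas A3i])
  have L0: "0 \<le> L" unfolding L_def by (rule integral_nonneg_AE) simp
  have QLSv: "QLS M Y X s \<beta>LS g = ennreal (L / (2 * s g) + s g / 2)" if "s g > 0" for g
    unfolding L_def by (rule QLS_val[where s=s and g=g, OF P IL that])
  have Lpos: "L > 0"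
  proof (rule ccontr)
    assume "\<not> L > 0"
    then have L00: "L = 0" using L0 by simp
    define t where "t = s \<gamma>LS"
    have t: "t > 0" using LS_in t_def by simp
    obtain g where g: "s g = t / 2" using surj[of "t/2"] t by auto
    have "QLS M Y X s \<beta>LS \<gamma>LS \<le> QLS M Y X s \<beta>LS g" using LS_min g t by simp
    then have "ennreal (t / 2) \<le> ennreal (t / 4)"
      using QLSv[of \<gamma>LS] QLSv[of g] g t LS_in L00 unfolding t_def by simp
    then have "t / 2 \<le> t / 4" using t by (simp add: ennreal_le_iff)
    then show False using t by simp
  qed
  have QLSle: "QLS M Y X s \<beta>LS \<gamma>LS \<le> ennreal (sqrt L)"
  proof -
    obtain g where g: "s g = sqrt L" using surj[of "sqrt L"] Lpos by auto
    have gp: "s g > 0" using g Lpos by simp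
    have "L / (2 * sqrt L) + sqrt L / 2 = sqrt L"
      using Lpos by (simp add: field_simps real_sqrt_mult_self)
    then have "QLS M Y X s \<beta>LS g = ennreal (sqrt L)" using QLSv[OF gp] g by simp
    then show ?thesis using LS_min[OF gp, of \<beta>LS] by simp
  qed
  have QLSge: "ennreal (sqrt L) \<le> QLS M Y X s \<beta>LS \<gamma>LS"
    unfolding QLSv[OF LS_in] by (rule ennreal_leI[OF amgm[OF L0 LS_in]])
  have QLSval: "QLS M Y X s \<beta>LS \<gamma>LS = ennreal (sqrt L)"
    using QLSle QLSge by (rule antisym)
  have Qstar_le: "Qobj M Y X s \<beta>s \<gamma>s \<le> Qobj M Y X s \<beta>LS \<gamma>v"
  proof (cases "(\<beta>LS, \<gamma>v) = (\<beta>s, \<gamma>s)")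
    case True then show ?thesis by simp
  next
    case False then show ?thesis using star_unique_min[OF LSv_in] by (simp add: less_imp_le)
  qed
  define A where "A = (\<integral>\<^sup>+ \<omega>. ennreal ((Y \<omega> - X \<omega> \<bullet> \<beta>s)\<^sup>2 / s (X \<omega> \<bullet> \<gamma>s)) \<partial>M)"
  define B where "B = (\<integral>\<^sup>+ \<omega>. ennreal (s (X \<omega> \<bullet> \<gamma>s)) \<partial>M)"
  have Qs: "Qobj M Y X s \<beta>s \<gamma>s = (A + B) * ennreal (1/2)"
    unfolding A_def B_def by (rule Qsplit[OF Ymeas Xmeas sm star_in])
  have "Qobj M Y X s \<beta>s \<gamma>s \<le> ennreal (sqrt L)"
    using Qstar_le QLS_eq QLSval by simp
  then have "(A + B) * ennreal (1/2) \<noteq> \<infinity>" using Qs by (auto simp: top_unique)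
  then have ABf: "A + B \<noteq> \<infinity>" by (auto simp: ennreal_top_mult)
  then obtain a where a: "0 \<le> a" "A = ennreal a" using ennreal_ex[of A] by auto
  obtain b where b: "0 \<le> b" "B = ennreal b" using ennreal_ex[of B] ABf by auto
  have conv: "(ennreal x + ennreal y) * ennreal (1/2) = ennreal ((x + y) * (1/2))"
    if "0 \<le> x" "0 \<le> y" for x y :: real
    using that by (subst ennreal_mult) auto
  have Qs2: "Qobj M Y X s \<beta>s \<gamma>s = ennreal ((a + b) * (1/2))"
    using Qs a b conv by simp
  have key: "a + b \<le> a / k + k * b" if k: "k > 0" for k
  proof -
    obtain \<gamma>' where g': "\<forall>\<omega>\<in>space M. s (X \<omega> \<bullet> \<gamma>') = k * s (X \<omega> \<bullet> \<gamma>s)" using scl[OF k] by auto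
    note SL = scale_lemma[OF Ymeas Xmeas sm star_in k]
    have gin: "\<gamma>' \<in> Theta_g M X s" by (rule SL(1)) (use g' in simp)
    have e2: "(\<integral>\<^sup>+\<omega>. ennreal ((Y \<omega> - X \<omega> \<bullet> \<beta>s)\<^sup>2 / s (X \<omega> \<bullet> \<gamma>')) \<partial>M) = ennreal (1/k) * A"
      unfolding A_def by (rule SL(2)) (use g' in simp)
    have e3: "(\<integral>\<^sup>+\<omega>. ennreal (s (X \<omega> \<bullet> \<gamma>')) \<partial>M) = ennreal k * B"
      unfolding B_def by (rule SL(3)) (use g' in simp)
    have "Qobj M Y X s \<beta>s \<gamma>' = (ennreal (1/k) * A + ennreal k * B) * ennreal (1/2)"
      using Qsplit[OF Ymeas Xmeas sm gin, of \<beta>s] e2 e3 by simp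
    also have "\<dots> = ennreal ((a / k + k * b) * (1/2))"
    proof -
      have m1: "ennreal (1/k) * ennreal a = ennreal (a/k)"
        using ennreal_mult'[of "1/k" a] k by simp
      have m2: "ennreal k * ennreal b = ennreal (k*b)"
        by (rule ennreal_mult'[symmetric]) (use k in simp)
      have "0 \<le> a/k" "0 \<le> k*b" using a(1) b(1) k by simp_all
      then show ?thesis unfolding a(2) b(2) m1 m2 by (rule conv)
    qed
    finally have Q': "Qobj M Y X s \<beta>s \<gamma>' = ennreal ((a / k + k * b) * (1/2))" .
    have "Qobj M Y X s \<beta>s \<gamma>s \<le> Qobj M Y X s \<beta>s \<gamma>'"
    proof (cases "(\<beta>s, \<gamma>') = (\<beta>s, \<gamma>s)")
      case True then show ?thesis by simp
    next
      case False then show ?thesis using star_unique_min[OF gin] by (simp add: less_imp_le)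
    qed
    then have "(a + b) * (1/2) \<le> (a / k + k * b) * (1/2)"
      using Qs2 Q' a b k by (simp add: ennreal_le_iff)
    then show ?thesis by (rule mult_right_le_imp_le) simp
  qed
  have ab: "a = b" by (rule real_key[OF a(1) b(1) key])
  have half: "(a + b) * (1/2) = a" using ab by simp
  have AQ: "A = Qobj M Y X s \<beta>s \<gamma>s" unfolding Qs2 half a(2) ..
  have LSQ: "Qobj M Y X s \<beta>LS \<gamma>v = ennreal (sqrt L)" unfolding QLS_eq QLSval ..
  have part1: "A \<le> ennreal (sqrt L)"
    unfolding AQ LSQ[symmetric] by (rule Qstar_le)
  have part2: "A = ennreal (sqrt L) \<longleftrightarrow> (\<beta>s = \<beta>LS \<and> \<gamma>s = \<gamma>v)"
  proof
    assume h: "A = ennreal (sqrt L)"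
    show "\<beta>s = \<beta>LS \<and> \<gamma>s = \<gamma>v"
    proof (rule ccontr)
      assume "\<not> (\<beta>s = \<beta>LS \<and> \<gamma>s = \<gamma>v)"
      then have "(\<beta>LS, \<gamma>v) \<noteq> (\<beta>s, \<gamma>s)" by auto
      then have "Qobj M Y X s \<beta>s \<gamma>s < Qobj M Y X s \<beta>LS \<gamma>v" by (rule star_unique_min[OF LSv_in])
      then have "A < ennreal (sqrt L)" unfolding AQ LSQ .
      then show False using h by simp
    qed
  next
    assume "\<beta>s = \<beta>LS \<and> \<gamma>s = \<gamma>v"
    then have "Qobj M Y X s \<beta>s \<gamma>s = Qobj M Y X s \<beta>LS \<gamma>v" by simp
    then show "A = ennreal (sqrt L)" unfolding AQ LSQ .
  qed
  show ?thesis using part1 part2 unfolding A_def L_def \<gamma>v_def by (rule conjI)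
qed

end
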